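(* Let $(p_\lambda(\mathbf y))_{\lambda\in\mathcal P}$ be a full sequence of symmetric functions. Then $(p_\lambda)$ is of binomial type if and only if there exists a quasi-genus $G$ such that $(p_\lambda)$ is associated with $G$.
   Context: **Partitions and the order.** $\mathcal P$ is the set of integer partitions. Partitions of $n$ are totally ordered by Macdonald's reverse lexicographic order: $\lambda>\mu$ iff the first nonzero difference $\lambda_i-\mu_i$ is positive. **Full sequence.** A nonzero homogeneous symmetric function $p$ of degree $n$, written $p=\sum_\lambda c_\lambda m_\lambda$ in monomial symmetric functions, has exact degree equal to the largest $\lambda\vdash n$ with $c_\lambda\ne0$. A full sequence is a family $(p_\lambda(\mathbf y))_{\lambda\in\mathcal P}$ of homogeneous symmetric functions in $\mathbf y=(y_1,y_2,\dots)$ with each $p_\lambda$ of exact degree $\lambda$. **Vector conventions.** For a vector $\alpha$ of nonnegative integers with finite support, $p_\alpha$ (resp. $G_\alpha$) denotes the value at the partition obtained by sorting $\alpha$ into weakly decreasing order. For vectors we write $\alpha!=\prod_i\alpha_i!$ and $|\alpha|=\sum_i\alpha_i$, and $\binom{\lambda}{\alpha}=\frac{\lambda!}{\alpha!(\lambda-\alpha)!}$ for $0\le\alpha\le\lambda$ componentwise. **Binomial type.** $(p_\lambda)$ is of binomial type if, for disjoint variable sets $\mathbf y,\mathbf z$ and every $\lambda$, $$p_\lambda(\mathbf y\cup\mathbf z)=\sum_{\alpha}\binom{\lambda}{\alpha}p_\alpha(\mathbf y)\,p_{\lambda-\alpha}(\mathbf z),$$ where $\alpha$ ranges over vectors with $0\le\alpha\le\lambda$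 (viewing $\lambda=(\lambda_1,\dots,\lambda_{\ell(\lambda)})$). **Quasi-genus.** A quasi-genus is an assignment of a complex number $G_\lambda$ to each partition $\lambda$ (equivalently a functor from set partitions under relabeling to $\mathbb C$, depending only on block type), with $G_\emptyset=1$. **Association.** $(p_\lambda)$ is associated with $G$ (i.e. it enumerates $G$-enriched functions from a set partitioned by type $\lambda$ to $\{y_1,y_2,\dots\}$) if for every $\lambda$ $$p_\lambda(\mathbf y)=\sum\frac{\lambda!}{\prod_j\alpha^{(j)}!}\prod_{j\ge1}G_{\alpha^{(j)}}\,y_j^{|\alpha^{(j)}|}.$$ The sum is over families $(\alpha^{(j)})_{j\ge1}$ of vectors in $\mathbb Z_{\ge0}^{\ell(\lambda)}$, all but finitely many zero, with $\sum_j\alpha^{(j)}=\lambda$. *)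

theory Defs
  imports Complex_Main
begin

text \<open>Vectors indexed by the parts of a partition lambda are lists of length (length lambda).
  A monomial y^e in the variables y_0, y_1, ... is an exponent function e with finite support;
  a (formal) symmetric function is represented by its coefficient function on monomials.\<close>

definition is_partition :: "nat list \<Rightarrow> bool" where
  "is_partition lam \<longleftrightarrow> sorted_wrt (\<ge>) lam \<and> 0 \<notin> set lam"

definition part_get :: "nat list \<Rightarrow> nat \<Rightarrow> nat" where
  "part_get lam i = (if i < length lam then lam ! i else 0)"

definition part_gt :: "nat list \<Rightarrow> nat list \<Rightarrow> bool" where
  "part_gt mu lam \<longleftrightarrow>
     (\<exists>k. (\<forall>i<k. part_get mu i = part_get lam i) \<and> part_get mu k > part_get lam k)"

definition sort_part :: "nat list \<Rightarrow> nat list" where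
  "sort_part a = rev (sort (filter (\<lambda>x. 0 < x) a))"

type_synonym monom = "nat \<Rightarrow> nat"
type_synonym sfun = "monom \<Rightarrow> complex"

definition is_monom :: "monom \<Rightarrow> bool" where
  "is_monom e \<longleftrightarrow> finite {i. e i \<noteq> 0}"

definition monom_deg :: "monom \<Rightarrow> nat" where
  "monom_deg e = (\<Sum>i\<in>{i. e i \<noteq> 0}. e i)"

text \<open>Monomial whose exponents are the parts of lam: the leading monomial of m_lam.\<close>
definition monom_of :: "nat list \<Rightarrow> monom" where
  "monom_of lam = part_get lam"

definition homog_sym :: "nat \<Rightarrow> sfun \<Rightarrow> bool" where
  "homog_sym n f \<longleftrightarrow>
     (\<forall>e. f e \<noteq> 0 \<longrightarrow> is_monom e \<and> monom_deg e = n) \<and>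
     (\<forall>e \<sigma>. bij \<sigma> \<longrightarrow> f (e \<circ> \<sigma>) = f e)"

text \<open>Coefficient of m_mu in a symmetric function f.\<close>
definition mcoeff :: "sfun \<Rightarrow> nat list \<Rightarrow> complex" where
  "mcoeff f mu = f (monom_of mu)"

definition exact_degree :: "sfun \<Rightarrow> nat list \<Rightarrow> bool" where
  "exact_degree f lam \<longleftrightarrow> mcoeff f lam \<noteq> 0 \<and>
     (\<forall>mu. is_partition mu \<and> sum_list mu = sum_list lam \<and> part_gt mu lam \<longrightarrow> mcoeff f mu = 0)"

definition full_sequence :: "(nat list \<Rightarrow> sfun) \<Rightarrow> bool" where
  "full_sequence p \<longleftrightarrow>
     (\<forall>lam. is_partition lam \<longrightarrow> homog_sym (sum_list lam) (p lam) \<and> exact_degree (p lam) lam)"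

text \<open>Disjoint union of variable sets y \<union> z: y_i is identified with variable 2i and z_i with
  variable 2i+1; the coefficient of y^a z^b in f(y \<union> z) is f at merge a b.\<close>
definition merge_monom :: "monom \<Rightarrow> monom \<Rightarrow> monom" where
  "merge_monom a b = (\<lambda>k. if even k then a (k div 2) else b (k div 2))"

definition vec_le :: "nat list \<Rightarrow> nat list \<Rightarrow> bool" where
  "vec_le a lam \<longleftrightarrow> length a = length lam \<and> (\<forall>i<length lam. a ! i \<le> lam ! i)"

definition vec_binom :: "nat list \<Rightarrow> nat list \<Rightarrow> nat" where
  "vec_binom lam a = (\<Prod>i<length lam. (lam ! i) choose (a ! i))"

definition vec_minus :: "nat list \<Rightarrow> nat list \<Rightarrow> nat list" where
  "vec_minus lam a = map2 (-) lam a"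

definition vec_fact :: "nat list \<Rightarrow> nat" where
  "vec_fact a = (\<Prod>x\<leftarrow>a. fact x)"

definition binomial_type :: "(nat list \<Rightarrow> sfun) \<Rightarrow> bool" where
  "binomial_type p \<longleftrightarrow>
     (\<forall>lam a b. is_partition lam \<longrightarrow>
        p lam (merge_monom a b) =
          (\<Sum>\<alpha>\<in>{\<alpha>. vec_le \<alpha> lam}.
             of_nat (vec_binom lam \<alpha>) * p (sort_part \<alpha>) a * p (sort_part (vec_minus lam \<alpha>)) b))"

definition quasi_genus :: "(nat list \<Rightarrow> complex) \<Rightarrow> bool" where
  "quasi_genus G \<longleftrightarrow> G [] = 1"

text \<open>Families (alpha^(j))_j of vectors of length l(lam) with |alpha^(j)| = e_j and
  sum_j alpha^(j) = lam; these index the terms contributing to the monomial y^e.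
  (Since |alpha^(j)| = e_j, alpha^(j) = 0 whenever e_j = 0.)\<close>
definition assoc_families :: "nat list \<Rightarrow> monom \<Rightarrow> (nat \<Rightarrow> nat list) set" where
  "assoc_families lam e = {F. (\<forall>j. length (F j) = length lam \<and> sum_list (F j) = e j) \<and>
       (\<forall>i<length lam. (\<Sum>j\<in>{j. e j \<noteq> 0}. F j ! i) = lam ! i)}"

text \<open>Factors with alpha^(j) = 0 contribute G_0 = 1 and 0! = 1, so products are over supp e.\<close>
definition associated :: "(nat list \<Rightarrow> sfun) \<Rightarrow> (nat list \<Rightarrow> complex) \<Rightarrow> bool" where
  "associated p G \<longleftrightarrow>
     (\<forall>lam e. is_partition lam \<longrightarrow>
        p lam e = (if is_monom e then
          (\<Sum>F\<in>assoc_families lam e.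
             of_nat (vec_fact lam) / of_nat (\<Prod>j\<in>{j. e j \<noteq> 0}. vec_fact (F j)) *
             (\<Prod>j\<in>{j. e j \<noteq> 0}. G (sort_part (F j))))
          else 0))"

end

theory Submission
  imports Defs "HOL-Combinatorics.Permutations" "HOL-Library.Multiset"
begin

definition KK :: "nat list \<Rightarrow> nat multiset" where
  "KK x = mset (filter (\<lambda>y. 0 < y) x)"

lemma sort_part_KK: "KK x = KK y \<Longrightarrow> sort_part x = sort_part y"
proof -
  assume h: "KK x = KK y"
  have "sort (filter (\<lambda>y. 0 < y) x) = sort (filter (\<lambda>y. 0 < y) y)"
    by (rule properties_for_sort) (use h in \<open>auto simp: KK_def\<close>)
  then show ?thesis by (simp add: sort_part_def)
qed

lemma sum_list_KK: "sum_list x = sum_mset (KK x)"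
  by (induction x) (auto simp: KK_def)

lemma vec_fact_KK: "vec_fact x = prod_mset (image_mset fact (KK x))"
  by (induction x) (auto simp: KK_def vec_fact_def)

lemma vec_fact_pos: "vec_fact x > 0"
  by (induction x) (auto simp: vec_fact_def)

lemma KK_sort_part: "KK (sort_part x) = KK x"
  by (auto simp: KK_def sort_part_def filter_id_conv)

lemma partition_sort_part: "is_partition (sort_part x)"
  by (auto simp: is_partition_def sort_part_def sorted_wrt_rev)

lemma sort_part_partition: "is_partition x \<Longrightarrow> sort_part x = x"
proof -
  assume h: "is_partition x"
  then have f: "filter (\<lambda>y. 0 < y) x = x" by (auto simp: is_partition_def filter_id_conv) (metis gr0I)
  have "sorted (rev x)" using h by (auto simp: is_partition_def sorted_wrt_rev)
  then have "sort x = rev x"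
    by (intro properties_for_sort) auto
  then show ?thesis using f by (simp add: sort_part_def)
qed

definition SS :: "monom \<Rightarrow> nat set" where "SS e = {j. e j \<noteq> 0}"

lemma is_monom_SS: "is_monom e \<longleftrightarrow> finite (SS e)"
  by (simp add: is_monom_def SS_def)

definition TT :: "(nat list \<Rightarrow> complex) \<Rightarrow> nat list \<Rightarrow> monom \<Rightarrow> (nat \<Rightarrow> nat list) \<Rightarrow> complex" where
  "TT G v e F = of_nat (vec_fact v) / of_nat (\<Prod>j\<in>SS e. vec_fact (F j)) *
             (\<Prod>j\<in>SS e. G (sort_part (F j)))"

definition Phi :: "(nat list \<Rightarrow> complex) \<Rightarrow> nat list \<Rightarrow> monom \<Rightarrow> complex" where
  "Phi G v e = (if is_monom e then (\<Sum>F\<in>assoc_families v e. TT G v e F) else 0)"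

lemma associated_Phi: "associated p G \<longleftrightarrow> (\<forall>lam e. is_partition lam \<longrightarrow> p lam e = Phi G lam e)"
  unfolding associated_def Phi_def TT_def SS_def by simp

lemma assoc_iff: "F \<in> assoc_families v e \<longleftrightarrow>
   (\<forall>j. length (F j) = length v \<and> sum_list (F j) = e j) \<and> (\<forall>i<length v. (\<Sum>j\<in>SS e. F j ! i) = v ! i)"
  unfolding assoc_families_def SS_def by simp

lemma finite_assoc:
  assumes "is_monom e"
  shows "finite (assoc_families v e)"
proof -
  define l where "l = length v"
  define B where "B = (\<lambda>j. {xs. set xs \<subseteq> {0..e j} \<and> length xs = l})"
  define z where "z = replicate l (0::nat)"
  have fS: "finite (SS e)" using assms by (simp add: is_monom_SS)
  have fin: "finite (PiE (SS e) B)"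
    by (rule finite_PiE[OF fS]) (auto simp: B_def intro: finite_lists_length_eq)
  have "assoc_families v e \<subseteq> (\<lambda>g j. if j \<in> SS e then g j else z) ` (PiE (SS e) B)"
  proof
    fix F assume F: "F \<in> assoc_families v e"
    then have F1: "\<And>j. length (F j) = l" "\<And>j. sum_list (F j) = e j"
      by (auto simp: assoc_iff l_def)
    have "restrict F (SS e) \<in> PiE (SS e) B"
      using F1 member_le_sum_list by (fastforce simp: B_def)
    moreover have "F = (\<lambda>j. if j \<in> SS e then restrict F (SS e) j else z)"
    proof
      fix j
      show "F j = (if j \<in> SS e then restrict F (SS e) j else z)"
      proof (cases "j \<in> SS e")
        case False
        then have "sum_list (F j) = 0" using F1 by (simp add: SS_def)
        then have "\<forall>y\<in>set (F j). y = 0" by simp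
        then have "replicate (length (F j)) 0 = F j" by (rule replicate_length_same)
        then show ?thesis using False F1 by (simp add: z_def)
      qed simp
    qed
    ultimately show "F \<in> (\<lambda>g j. if j \<in> SS e then g j else z) ` (PiE (SS e) B)" by blast
  qed
  then show ?thesis using fin finite_subset by blast
qed

lemma finite_vec_le: "finite {\<alpha>. vec_le \<alpha> v}"
proof -
  have "{\<alpha>. vec_le \<alpha> v} \<subseteq> {xs. set xs \<subseteq> {0..sum_list v} \<and> length xs = length v}"
  proof clarify
    fix \<alpha> assume h: "vec_le \<alpha> v"
    have "x \<le> sum_list v" if "x \<in> set \<alpha>" for x
    proof -
      obtain i where i: "i < length \<alpha>" "x = \<alpha> ! i" using \<open>x \<in> set \<alpha>\<close> by (auto simp: in_set_conv_nth)
      then have "x \<le> v ! i" using h by (auto simp: vec_le_def)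
      also have "\<dots> \<le> sum_list v" using i h by (auto simp: vec_le_def elem_le_sum_list)
      finally show ?thesis .
    qed
    then show "set \<alpha> \<subseteq> {0..sum_list v} \<and> length \<alpha> = length v" using h by (auto simp: vec_le_def)
  qed
  then show ?thesis using finite_lists_length_eq[of "{0..sum_list v}"] finite_subset by blast
qed

lemma vec_minus_length: "length a = length v \<Longrightarrow> length (vec_minus v a) = length v"
  by (simp add: vec_minus_def)

lemma vec_minus_nth: "length a = length v \<Longrightarrow> i < length v \<Longrightarrow> vec_minus v a ! i = v ! i - a ! i"
  by (simp add: vec_minus_def)

lemma vec_fact_nth: "vec_fact x = (\<Prod>i<length x. fact (x ! i))"
  by (induction x) (simp_all add: vec_fact_def prod.lessThan_Suc_shift del: prod.lessThan_Suc)

lemma vec_binom_eq: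
  assumes "vec_le a v"
  shows "vec_binom v a * vec_fact a * vec_fact (vec_minus v a) = vec_fact v"
proof -
  have l: "length a = length v" using assms by (simp add: vec_le_def)
  have "vec_binom v a * vec_fact a * vec_fact (vec_minus v a) =
     (\<Prod>i<length v. (v ! i choose a ! i) * fact (a ! i) * fact (v ! i - a ! i))"
    unfolding vec_binom_def vec_fact_nth prod.distrib l vec_minus_length[OF l]
    by (simp add: vec_minus_nth[OF l])
  also have "\<dots> = (\<Prod>i<length v. fact (v ! i))"
    by (rule prod.cong) (use assms in \<open>auto simp: vec_le_def binomial_fact_lemma[symmetric] mult_ac\<close>)
  finally show ?thesis by (simp add: vec_fact_nth)
qed

lemma SS_merge: "SS (merge_monom a b) = (\<lambda>j. 2*j) ` SS a \<union> (\<lambda>j. 2*j+1) ` SS b"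
proof (rule set_eqI)
  fix k
  show "k \<in> SS (merge_monom a b) \<longleftrightarrow> k \<in> (\<lambda>j. 2*j) ` SS a \<union> (\<lambda>j. 2*j+1) ` SS b"
  proof (cases "even k")
    case True
    then obtain j where "k = 2*j" by blast
    then show ?thesis by (auto simp: SS_def merge_monom_def; presburger)
  next
    case False
    then obtain j where "k = 2*j+1" using oddE by blast
    then show ?thesis by (auto simp: SS_def merge_monom_def; presburger)
  qed
qed

lemma is_monom_merge: "is_monom (merge_monom a b) \<longleftrightarrow> is_monom a \<and> is_monom b"
proof -
  have i1: "inj (\<lambda>j::nat. 2*j)" by (auto simp: inj_on_def)
  have i2: "inj (\<lambda>j::nat. 2*j+1)" by (auto simp: inj_on_def)
  show ?thesis unfolding is_monom_SS SS_merge
    using finite_image_iff[OF inj_on_subset[OF i1]] finite_image_iff[OF inj_on_subset[OF i2]]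
    by auto
qed

lemma sum_merge:
  fixes f :: "nat \<Rightarrow> 'b::comm_monoid_add"
  assumes "is_monom a" "is_monom b"
  shows "(\<Sum>k\<in>SS (merge_monom a b). f k) = (\<Sum>j\<in>SS a. f (2*j)) + (\<Sum>j\<in>SS b. f (2*j+1))"
proof -
  have i1: "inj (\<lambda>j::nat. 2*j)" by (auto simp: inj_on_def)
  have i2: "inj (\<lambda>j::nat. 2*j+1)" by (auto simp: inj_on_def)
  have fa: "finite (SS a)" "finite (SS b)" using assms by (auto simp: is_monom_SS)
  have d: "(\<lambda>j. 2*j) ` SS a \<inter> (\<lambda>j. 2*j+1) ` SS b = {}" by auto presburger
  have r1: "sum f ((\<lambda>j. 2*j) ` SS a) = (\<Sum>j\<in>SS a. f (2*j))"
    using sum.reindex[OF inj_on_subset[OF i1, of "SS a"]] by (simp add: comp_def)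
  have r2: "sum f ((\<lambda>j. 2*j+1) ` SS b) = (\<Sum>j\<in>SS b. f (2*j+1))"
    using sum.reindex[OF inj_on_subset[OF i2, of "SS b"]] by (simp add: comp_def)
  show ?thesis unfolding SS_merge
    by (subst sum.union_disjoint) (use fa d r1 r2 in auto)
qed

lemma prod_merge:
  fixes f :: "nat \<Rightarrow> 'b::comm_monoid_mult"
  assumes "is_monom a" "is_monom b"
  shows "(\<Prod>k\<in>SS (merge_monom a b). f k) = (\<Prod>j\<in>SS a. f (2*j)) * (\<Prod>j\<in>SS b. f (2*j+1))"
proof -
  have i1: "inj (\<lambda>j::nat. 2*j)" by (auto simp: inj_on_def)
  have i2: "inj (\<lambda>j::nat. 2*j+1)" by (auto simp: inj_on_def)
  have fa: "finite (SS a)" "finite (SS b)" using assms by (auto simp: is_monom_SS)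
  have d: "(\<lambda>j. 2*j) ` SS a \<inter> (\<lambda>j. 2*j+1) ` SS b = {}" by auto presburger
  have r1: "prod f ((\<lambda>j. 2*j) ` SS a) = (\<Prod>j\<in>SS a. f (2*j))"
    using prod.reindex[OF inj_on_subset[OF i1, of "SS a"]] by (simp add: comp_def)
  have r2: "prod f ((\<lambda>j. 2*j+1) ` SS b) = (\<Prod>j\<in>SS b. f (2*j+1))"
    using prod.reindex[OF inj_on_subset[OF i2, of "SS b"]] by (simp add: comp_def)
  show ?thesis unfolding SS_merge
    by (subst prod.union_disjoint) (use fa d r1 r2 in auto)
qed

lemma field_aux: "(B::complex) * Va * Vb = W \<Longrightarrow> X \<noteq> 0 \<Longrightarrow> Y \<noteq> 0 \<Longrightarrow>
   W / (X*Y) * (P1*P2) = B * (Va/X*P1) * (Vb/Y*P2)"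
  by (auto simp: field_simps)

lemma prod_vf_nz: "(of_nat (\<Prod>j\<in>A. vec_fact (F j)) :: complex) \<noteq> 0"
  using vec_fact_pos by (metis of_nat_eq_0_iff prod_pos less_irrefl)

lemma Phi_merge:
  "Phi G v (merge_monom a b) =
    (\<Sum>\<alpha>\<in>{\<alpha>. vec_le \<alpha> v}. of_nat (vec_binom v \<alpha>) * Phi G \<alpha> a * Phi G (vec_minus v \<alpha>) b)"
proof (cases "is_monom a \<and> is_monom b")
  case False
  then show ?thesis by (auto simp: Phi_def is_monom_merge)
next
  case True
  then have ma: "is_monom a" and mb: "is_monom b" by auto
  define e where "e = merge_monom a b"
  have me: "is_monom e" using True by (simp add: e_def is_monom_merge)
  have ea: "\<And>j. e (2*j) = a j" and eb: "\<And>j. e (2*j+1) = b j" by (simp_all add: e_def merge_monom_def)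
  have eab: "\<And>k. e k = (if even k then a (k div 2) else b (k div 2))" by (simp add: e_def merge_monom_def)
  define V where "V = {\<alpha>. vec_le \<alpha> v}"
  define Tset where "Tset = (SIGMA \<alpha>:V. assoc_families \<alpha> a \<times> assoc_families (vec_minus v \<alpha>) b)"
  define col where "col F = map (\<lambda>i. \<Sum>j\<in>SS a. F (2*j) ! i) [0..<length v]" for F :: "nat \<Rightarrow> nat list"
  define hm where "hm F = (col F, (\<lambda>j. F (2*j)), (\<lambda>j. F (2*j+1)))" for F
  define km where "km = (\<lambda>(\<alpha>::nat list, F1::nat\<Rightarrow>nat list, F2::nat \<Rightarrow> nat list).
       (\<lambda>k::nat. if even k then F1 (k div 2) else F2 (k div 2)))"
  define hh where "hh = (\<lambda>(\<alpha>, F1, F2). of_nat (vec_binom v \<alpha>) * TT G \<alpha> a F1 * TT G (vec_minus v \<alpha>) b F2)"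
  have split: "(\<Sum>j\<in>SS e. F j ! i) = (\<Sum>j\<in>SS a. F (2*j) ! i) + (\<Sum>j\<in>SS b. F (2*j+1) ! i)" for F i
    unfolding e_def by (rule sum_merge[OF ma mb])
  have step1: "(\<Sum>F\<in>assoc_families v e. TT G v e F) = sum hh Tset"
  proof (rule sum.reindex_bij_witness[where i=km and j=hm])
    fix F assume F: "F \<in> assoc_families v e"
    have Fl: "\<And>j. length (F j) = length v" and Fs: "\<And>j. sum_list (F j) = e j"
      and Fc: "\<And>i. i < length v \<Longrightarrow> (\<Sum>j\<in>SS e. F j ! i) = v ! i" using F by (auto simp: assoc_iff)
    have cl: "length (col F) = length v" by (simp add: col_def)
    have cn: "\<And>i. i < length v \<Longrightarrow> col F ! i = (\<Sum>j\<in>SS a. F (2*j) ! i)" by (simp add: col_def)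
    have cv: "\<And>i. i < length v \<Longrightarrow> (\<Sum>j\<in>SS b. F (2*j+1) ! i) = v ! i - col F ! i"
      using Fc split cn by (metis add_diff_cancel_left')
    have vl: "vec_le (col F) v" unfolding vec_le_def using cl cn Fc split by (metis le_add1)
    have "km (hm F) = F"
    proof
      fix k
      show "km (hm F) k = F k"
        by (cases "even k") (simp_all add: km_def hm_def odd_two_times_div_two_succ)
    qed
    then show "km (hm F) = F" .
    have a1: "(\<lambda>j. F (2*j)) \<in> assoc_families (col F) a"
      unfolding assoc_iff using Fl Fs ea cl cn by simp
    have a2: "(\<lambda>j. F (2*j+1)) \<in> assoc_families (vec_minus v (col F)) b"
      unfolding assoc_iff using Fl Fs eb cl cv by (simp add: vec_minus_length vec_minus_nth)
    show "hm F \<in> Tset" using vl a1 a2 by (simp add: hm_def Tset_def V_def)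
    have bi: "of_nat (vec_binom v (col F)) * of_nat (vec_fact (col F)) * of_nat (vec_fact (vec_minus v (col F)))
        = (of_nat (vec_fact v) :: complex)"
      using vec_binom_eq[OF vl] by (metis of_nat_mult)
    have p1: "(\<Prod>j\<in>SS e. vec_fact (F j)) = (\<Prod>j\<in>SS a. vec_fact (F (2*j))) * (\<Prod>j\<in>SS b. vec_fact (F (2*j+1)))"
      unfolding e_def by (rule prod_merge[OF ma mb])
    have p2: "(\<Prod>j\<in>SS e. G (sort_part (F j))) = (\<Prod>j\<in>SS a. G (sort_part (F (2*j)))) * (\<Prod>j\<in>SS b. G (sort_part (F (2*j+1))))"
      unfolding e_def by (rule prod_merge[OF ma mb])
    show "hh (hm F) = TT G v e F"
      unfolding hh_def hm_def TT_def p1 p2 of_nat_mult split_conv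
      by (rule field_aux[OF bi prod_vf_nz prod_vf_nz, symmetric])
  next
    fix t assume t: "t \<in> Tset"
    then obtain \<alpha> F1 F2 where tt: "t = (\<alpha>, F1, F2)" and vl: "vec_le \<alpha> v"
      and F1: "F1 \<in> assoc_families \<alpha> a" and F2: "F2 \<in> assoc_families (vec_minus v \<alpha>) b"
      by (auto simp: Tset_def V_def)
    have al: "length \<alpha> = length v" using vl by (simp add: vec_le_def)
    have F1l: "\<And>j. length (F1 j) = length v" and F1s: "\<And>j. sum_list (F1 j) = a j"
      and F1c: "\<And>i. i < length v \<Longrightarrow> (\<Sum>j\<in>SS a. F1 j ! i) = \<alpha> ! i" using F1 al by (auto simp: assoc_iff)
    have F2l: "\<And>j. length (F2 j) = length v" and F2s: "\<And>j. sum_list (F2 j) = b j"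
      and F2c: "\<And>i. i < length v \<Longrightarrow> (\<Sum>j\<in>SS b. F2 j ! i) = v ! i - \<alpha> ! i"
      using F2 al by (auto simp: assoc_iff vec_minus_length vec_minus_nth)
    have kt: "km t = (\<lambda>k. if even k then F1 (k div 2) else F2 (k div 2))" by (simp add: km_def tt)
    have "col (km t) = \<alpha>"
      by (rule nth_equalityI) (simp_all add: col_def kt al F1c)
    moreover have "hm (km t) = (col (km t), F1, F2)" by (simp add: hm_def kt)
    ultimately show "hm (km t) = t" by (simp add: tt)
    show "km t \<in> assoc_families v e"
      unfolding assoc_iff
    proof (intro conjI allI impI)
      fix j
      show "length (km t j) = length v" by (simp add: kt F1l F2l)
      show "sum_list (km t j) = e j" by (simp add: kt F1s F2s eab)
    next
      fix i assume i: "i < length v"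
      have "\<alpha> ! i \<le> v ! i" using vl i by (simp add: vec_le_def)
      then show "(\<Sum>j\<in>SS e. km t j ! i) = v ! i"
        unfolding split by (simp add: kt F1c[OF i] F2c[OF i])
    qed
  qed
  have finT: "finite V" "\<forall>x\<in>V. finite (assoc_families x a \<times> assoc_families (vec_minus v x) b)"
    using finite_vec_le finite_assoc[OF ma] finite_assoc[OF mb] by (auto simp: V_def)
  have step2: "sum hh Tset = (\<Sum>\<alpha>\<in>V. \<Sum>FF\<in>assoc_families \<alpha> a \<times> assoc_families (vec_minus v \<alpha>) b. hh (\<alpha>, FF))"
    unfolding Tset_def using sum.Sigma[OF finT, of "\<lambda>\<alpha> FF. hh (\<alpha>, FF)"] by simp
  have step3: "(\<Sum>FF\<in>assoc_families \<alpha> a \<times> assoc_families (vec_minus v \<alpha>) b. hh (\<alpha>, FF)) =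
     of_nat (vec_binom v \<alpha>) * Phi G \<alpha> a * Phi G (vec_minus v \<alpha>) b" for \<alpha>
  proof -
    have "(\<Sum>FF\<in>assoc_families \<alpha> a \<times> assoc_families (vec_minus v \<alpha>) b. hh (\<alpha>, FF)) =
       (\<Sum>F1\<in>assoc_families \<alpha> a. \<Sum>F2\<in>assoc_families (vec_minus v \<alpha>) b. hh (\<alpha>, F1, F2))"
      using sum.cartesian_product[of "\<lambda>F1 F2. hh (\<alpha>, F1, F2)"] by (simp add: case_prod_beta')
    also have "\<dots> = (\<Sum>F1\<in>assoc_families \<alpha> a. \<Sum>F2\<in>assoc_families (vec_minus v \<alpha>) b.
        of_nat (vec_binom v \<alpha>) * (TT G \<alpha> a F1 * TT G (vec_minus v \<alpha>) b F2))"
      by (simp add: hh_def mult.assoc)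
    also have "\<dots> = of_nat (vec_binom v \<alpha>) * (\<Sum>F1\<in>assoc_families \<alpha> a. \<Sum>F2\<in>assoc_families (vec_minus v \<alpha>) b.
        TT G \<alpha> a F1 * TT G (vec_minus v \<alpha>) b F2)"
      by (simp add: sum_distrib_left)
    also have "\<dots> = of_nat (vec_binom v \<alpha>) * ((\<Sum>F1\<in>assoc_families \<alpha> a. TT G \<alpha> a F1) *
         (\<Sum>F2\<in>assoc_families (vec_minus v \<alpha>) b. TT G (vec_minus v \<alpha>) b F2))"
      by (simp add: sum_product)
    finally show ?thesis using ma mb by (simp add: Phi_def mult.assoc)
  qed
  show ?thesis
    using step1 step2 step3 me by (simp add: Phi_def e_def V_def)
qed

lemma mset_filter_nth: "mset (filter P x) = image_mset (nth x) (mset_set {k. k < length x \<and> P (x ! k)})"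
proof -
  have "mset (filter P x) = mset (filter P (map (nth x) [0..<length x]))" by (simp add: map_nth)
  also have "\<dots> = image_mset (nth x) (mset (filter (\<lambda>k. P (x ! k)) [0..<length x]))"
    by (simp only: filter_map mset_map comp_def)
  also have "mset (filter (\<lambda>k. P (x ! k)) [0..<length x]) = mset_set {k. k < length x \<and> P (x ! k)}"
    by (subst mset_set_set[symmetric]) auto
  finally show ?thesis .
qed

lemma KK_nth: "KK x = image_mset (nth x) (mset_set {k. k < length x \<and> 0 < x ! k})"
  unfolding KK_def by (rule mset_filter_nth)

lemma Phi_reindex:
  fixes \<pi> :: "nat \<Rightarrow> nat"
  assumes inj: "inj_on \<pi> {..<m}" and rng: "\<pi> ` {..<m} \<subseteq> {..<n}"
    and lw: "length w = m" and lv: "length v = n"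
    and wv: "\<And>i. i < m \<Longrightarrow> w ! i = v ! \<pi> i"
    and z: "\<And>k. k < n \<Longrightarrow> k \<notin> \<pi> ` {..<m} \<Longrightarrow> v ! k = 0"
  shows "Phi G w e = Phi G v e"
proof (cases "is_monom e")
  case False
  then show ?thesis by (simp add: Phi_def)
next
  case me: True
  define R where "R = \<pi> ` {..<m}"
  define iv where "iv = inv_into {..<m} \<pi>"
  define tr where "tr x = map (\<lambda>i. x ! \<pi> i) [0..<m]" for x :: "nat list"
  define itr where "itr y = map (\<lambda>k. if k \<in> R then y ! (iv k) else 0) [0..<n]" for y :: "nat list"
  have ivpi: "\<And>i. i < m \<Longrightarrow> iv (\<pi> i) = i" unfolding iv_def using inj by (auto intro: inv_into_f_f)
  have ivR: "\<And>k. k \<in> R \<Longrightarrow> iv k < m \<and> \<pi> (iv k) = k"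
    unfolding R_def using ivpi by auto
  have piR: "\<And>i. i < m \<Longrightarrow> \<pi> i \<in> R \<and> \<pi> i < n" using rng by (auto simp: R_def)
  have KKtr: "KK (tr x) = KK x" if xl: "length x = n" and xz: "\<And>k. k < n \<Longrightarrow> k \<notin> R \<Longrightarrow> x ! k = 0" for x
  proof -
    define A where "A = {i. i < m \<and> 0 < x ! \<pi> i}"
    have "{k. k < length (tr x) \<and> 0 < tr x ! k} = A" by (auto simp: tr_def A_def)
    then have "KK (tr x) = image_mset (nth (tr x)) (mset_set A)"
      by (simp only: KK_nth)
    also have "\<dots> = image_mset (nth x \<circ> \<pi>) (mset_set A)"
      by (rule image_mset_cong) (auto simp: A_def tr_def)
    also have "\<dots> = image_mset (nth x) (image_mset \<pi> (mset_set A))"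
      by (simp add: multiset.map_comp)
    also have "image_mset \<pi> (mset_set A) = mset_set (\<pi> ` A)"
      by (rule image_mset_mset_set) (rule inj_on_subset[OF inj], auto simp: A_def)
    also have "\<pi> ` A = {k. k < length x \<and> 0 < x ! k}"
    proof
      show "\<pi> ` A \<subseteq> {k. k < length x \<and> 0 < x ! k}" using piR xl by (auto simp: A_def)
      show "{k. k < length x \<and> 0 < x ! k} \<subseteq> \<pi> ` A"
      proof clarify
        fix k assume k: "k < length x" "0 < x ! k"
        then have "k \<in> R" using xz xl by (metis less_irrefl)
        then show "k \<in> \<pi> ` A" using ivR k by (metis (mono_tags, lifting) A_def image_eqI mem_Collect_eq)
      qed
    qed
    finally show ?thesis by (simp add: KK_nth)
  qed
  have tritr: "tr (itr y) = y" if yl: "length y = m" for y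
  proof (rule nth_equalityI)
    show "length (tr (itr y)) = length y" by (simp add: tr_def yl)
    fix i assume "i < length (tr (itr y))"
    then have i: "i < m" by (simp add: tr_def)
    have "tr (itr y) ! i = itr y ! \<pi> i" using i by (simp add: tr_def)
    also have "\<dots> = y ! iv (\<pi> i)" using piR[OF i] by (simp add: itr_def)
    also have "\<dots> = y ! i" using ivpi[OF i] by simp
    finally show "tr (itr y) ! i = y ! i" .
  qed
  have itrl: "length (itr y) = n" for y by (simp add: itr_def)
  have itrz: "\<And>k. k < n \<Longrightarrow> k \<notin> R \<Longrightarrow> itr y ! k = 0" for y by (simp add: itr_def)
  have KKitr: "KK (itr y) = KK y" if "length y = m" for y
    using KKtr[OF itrl itrz, of y] tritr[OF that] by metis
  have itrtr: "itr (tr x) = x" if xl: "length x = n" and xz: "\<And>k. k < n \<Longrightarrow> k \<notin> R \<Longrightarrow> x ! k = 0" for x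
  proof (rule nth_equalityI)
    show "length (itr (tr x)) = length x" by (simp add: itr_def xl)
    fix k assume "k < length (itr (tr x))"
    then have k: "k < n" by (simp add: itr_def)
    show "itr (tr x) ! k = x ! k"
    proof (cases "k \<in> R")
      case True
      have "itr (tr x) ! k = tr x ! iv k" using k True by (simp add: itr_def)
      also have "\<dots> = x ! \<pi> (iv k)" using ivR[OF True] by (simp add: tr_def)
      also have "\<dots> = x ! k" using ivR[OF True] by simp
      finally show ?thesis .
    next
      case False
      then show ?thesis using k xz by (simp add: itr_def)
    qed
  qed
  have KKwv: "KK w = KK v"
  proof -
    have "w = tr v" by (rule nth_equalityI) (simp_all add: lw tr_def wv)
    then show ?thesis using KKtr[OF lv] z by (simp add: R_def)
  qed
  have Hz: "H j ! k = 0" if H: "H \<in> assoc_families v e" and k: "k < n" "k \<notin> R" for H j k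
  proof (cases "j \<in> SS e")
    case True
    have "H j ! k \<le> (\<Sum>j'\<in>SS e. H j' ! k)"
      by (rule member_le_sum) (use True me in \<open>auto simp: is_monom_SS\<close>)
    also have "\<dots> = v ! k" using H k lv by (auto simp: assoc_iff)
    also have "\<dots> = 0" using z k by (simp add: R_def)
    finally show ?thesis by simp
  next
    case False
    then have "sum_list (H j) = 0" using H by (auto simp: assoc_iff SS_def)
    moreover have "k < length (H j)" using H k lv by (auto simp: assoc_iff)
    ultimately show ?thesis using elem_le_sum_list[of k "H j"] by simp
  qed
  have "(\<Sum>F\<in>assoc_families w e. TT G w e F) = (\<Sum>H\<in>assoc_families v e. TT G v e H)"
  proof (rule sum.reindex_bij_witness[where j="\<lambda>F j. itr (F j)" and i="\<lambda>H j. tr (H j)"])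
    fix F assume F: "F \<in> assoc_families w e"
    have Fl: "\<And>j. length (F j) = m" and Fs: "\<And>j. sum_list (F j) = e j"
      and Fc: "\<And>i. i < m \<Longrightarrow> (\<Sum>j\<in>SS e. F j ! i) = w ! i" using F lw by (auto simp: assoc_iff)
    show "(\<lambda>j. tr (itr (F j))) = F" using tritr Fl by simp
    show "(\<lambda>j. itr (F j)) \<in> assoc_families v e"
      unfolding assoc_iff
    proof (intro conjI allI impI)
      fix j
      show "length (itr (F j)) = length v" by (simp add: itrl lv)
      show "sum_list (itr (F j)) = e j" using KKitr[OF Fl] Fs by (simp add: sum_list_KK)
    next
      fix k assume k: "k < length v"
      show "(\<Sum>j\<in>SS e. itr (F j) ! k) = v ! k"
      proof (cases "k \<in> R")
        case True
        have "(\<Sum>j\<in>SS e. itr (F j) ! k) = (\<Sum>j\<in>SS e. F j ! iv k)"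
          using True k lv by (simp add: itr_def)
        also have "\<dots> = w ! iv k" using Fc ivR[OF True] by blast
        also have "\<dots> = v ! k" using wv ivR[OF True] by metis
        finally show ?thesis .
      next
        case False
        then show ?thesis using k lv z by (simp add: itr_def R_def)
      qed
    qed
    show "TT G v e (\<lambda>j. itr (F j)) = TT G w e F"
    proof -
      have vf: "\<And>j. vec_fact (itr (F j)) = vec_fact (F j)" by (simp add: vec_fact_KK KKitr[OF Fl])
      have sp: "\<And>j. sort_part (itr (F j)) = sort_part (F j)" by (rule sort_part_KK[OF KKitr[OF Fl]])
      have "vec_fact v = vec_fact w" using KKwv by (simp add: vec_fact_KK)
      then show ?thesis by (simp add: TT_def vf sp)
    qed
  next
    fix H assume H: "H \<in> assoc_families v e"
    have Hl: "\<And>j. length (H j) = n" and Hs: "\<And>j. sum_list (H j) = e j"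
      and Hc: "\<And>k. k < n \<Longrightarrow> (\<Sum>j\<in>SS e. H j ! k) = v ! k" using H lv by (auto simp: assoc_iff)
    show "(\<lambda>j. itr (tr (H j))) = H" by (rule ext, rule itrtr[OF Hl Hz[OF H]])
    show "(\<lambda>j. tr (H j)) \<in> assoc_families w e"
      unfolding assoc_iff
    proof (intro conjI allI impI)
      fix j
      show "length (tr (H j)) = length w" by (simp add: tr_def lw)
      show "sum_list (tr (H j)) = e j" using KKtr[OF Hl Hz[OF H]] Hs by (simp add: sum_list_KK)
    next
      fix i assume i: "i < length w"
      show "(\<Sum>j\<in>SS e. tr (H j) ! i) = w ! i"
      proof -
        have "(\<Sum>j\<in>SS e. tr (H j) ! i) = (\<Sum>j\<in>SS e. H j ! \<pi> i)" using i lw by (simp add: tr_def)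
        also have "\<dots> = v ! \<pi> i" using Hc piR i lw by blast
        also have "\<dots> = w ! i" using wv i lw by metis
        finally show ?thesis .
      qed
    qed
  qed
  then show ?thesis by (simp add: Phi_def me)
qed

lemma Phi_sort_part: "Phi G (sort_part v) e = Phi G v e"
proof -
  define ps where "ps = filter (\<lambda>k. 0 < v ! k) [0..<length v]"
  define ys where "ys = map (nth v) ps"
  have fy: "filter (\<lambda>y. 0 < y) v = ys"
  proof -
    have "filter (\<lambda>y. 0 < y) v = filter (\<lambda>y. 0 < y) (map (nth v) [0..<length v])" by (simp add: map_nth)
    then show ?thesis by (simp add: filter_map comp_def ys_def ps_def)
  qed
  have "filter (\<lambda>y. 0<y) (sort_part v) = sort_part v" by (auto simp: sort_part_def filter_id_conv)
  then have "mset (sort_part v) = KK (sort_part v)" by (simp add: KK_def)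
  also have "\<dots> = KK v" by (rule KK_sort_part)
  also have "\<dots> = mset ys" by (simp add: KK_def fy)
  finally have "mset (sort_part v) = mset ys" .
  then obtain p where p: "p permutes {..<length ys}" and pl: "permute_list p ys = sort_part v"
    by (rule mset_eq_permutation)
  define m where "m = length ys"
  have "length (permute_list p ys) = m" by (simp add: m_def)
  then have lw: "length (sort_part v) = m" by (simp only: pl)
  have lps: "length ps = m" by (simp add: m_def ys_def)
  have dps: "distinct ps" by (simp add: ps_def)
  have pim: "p i < m" if "i < m" for i using permutes_in_image[OF p, of i] m_def that by simp
  have wv: "sort_part v ! i = v ! (ps ! p i)" if i: "i < m" for i
  proof -
    have "sort_part v ! i = permute_list p ys ! i" using pl by simp
    also have "\<dots> = ys ! p i" using permute_list_nth[OF p] i m_def by simp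
    also have "\<dots> = v ! (ps ! p i)" using pim[OF i] lps by (simp add: ys_def)
    finally show ?thesis .
  qed
  have inj: "inj_on (\<lambda>i. ps ! p i) {..<m}"
  proof -
    have "inj_on p {..<m}" by (rule permutes_inj_on[OF p])
    moreover have "inj_on (nth ps) {..<m}" using dps lps by (intro inj_on_nth) auto
    ultimately show ?thesis using pim by (auto simp: inj_on_def)
  qed
  have img: "(\<lambda>i. ps ! p i) ` {..<m} = set ps"
  proof -
    have "p ` {..<m} = {..<m}" using p m_def by (simp add: permutes_image)
    moreover have "(\<lambda>i. ps ! p i) ` {..<m} = nth ps ` (p ` {..<m})" by (simp add: image_image)
    ultimately have "(\<lambda>i. ps ! p i) ` {..<m} = nth ps ` {..<m}" by simp
    also have "\<dots> = set ps" using lps by (auto simp: in_set_conv_nth)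
    finally show ?thesis .
  qed
  show ?thesis
  proof (rule Phi_reindex[where \<pi>="\<lambda>i. ps ! p i" and m=m and n="length v"])
    show "inj_on (\<lambda>i. ps ! p i) {..<m}" by (rule inj)
    show "(\<lambda>i. ps ! p i) ` {..<m} \<subseteq> {..<length v}" using img by (auto simp: ps_def)
    show "length (sort_part v) = m" by (rule lw)
    show "\<And>i. i < m \<Longrightarrow> sort_part v ! i = v ! (ps ! p i)" by (rule wv)
    show "\<And>k. k < length v \<Longrightarrow> k \<notin> (\<lambda>i. ps ! p i) ` {..<m} \<Longrightarrow> v ! k = 0"
      using img by (auto simp: ps_def)
  qed simp
qed


lemma Phi_base:
  assumes lp: "is_partition lam" and se: "SS e \<subseteq> {0}" and G0: "G [] = 1"
  shows "Phi G lam e = (if sum_list lam = e 0 then G lam else 0)"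
proof -
  have me: "is_monom e" using se finite_subset by (auto simp: is_monom_SS)
  define l where "l = length lam"
  define F0 where "F0 = (\<lambda>j::nat. if j = 0 then lam else replicate l 0)"
  have ez: "\<And>j. j \<noteq> 0 \<Longrightarrow> e j = 0" using se by (auto simp: SS_def)
  have pos: "\<And>i. i < l \<Longrightarrow> 0 < lam ! i" using lp
    by (auto simp: is_partition_def l_def) (metis gr0I nth_mem)
  show ?thesis
  proof (cases "e 0 = 0")
    case True
    then have S0: "SS e = {}" using se by (auto simp: SS_def)
    show ?thesis
    proof (cases "lam = []")
      case True
      have A: "assoc_families lam e = {\<lambda>j. []}"
      proof
        show "assoc_families lam e \<subseteq> {\<lambda>j. []}" using True by (auto simp: assoc_iff)
        show "{\<lambda>j. []} \<subseteq> assoc_families lam e" using True \<open>e 0 = 0\<close> ez by (auto simp: assoc_iff) (metis neq0_conv)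
      qed
      show ?thesis using True \<open>e 0 = 0\<close> me G0 unfolding Phi_def A
        by (simp add: TT_def S0 vec_fact_def)
    next
      case False
      then have "0 < lam ! 0" using pos by (simp add: l_def)
      then have A: "assoc_families lam e = {}" using False by (auto simp: assoc_iff S0)
      have "sum_list lam \<noteq> 0" using \<open>0 < lam ! 0\<close> False
        by (metis elem_le_sum_list length_greater_0_conv not_le)
      then have ne: "sum_list lam \<noteq> e 0" using True by simp
      show ?thesis unfolding Phi_def A using ne by simp
    qed
  next
    case False
    then have S0: "SS e = {0}" using se by (auto simp: SS_def)
    have uniq: "F = F0" if F: "F \<in> assoc_families lam e" for F
    proof
      fix j
      show "F j = F0 j"
      proof (cases "j = 0")
        case True
        have "F 0 = lam" by (rule nth_equalityI) (use F in \<open>auto simp: assoc_iff S0\<close>)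
        then show ?thesis using True by (simp add: F0_def)
      next
        case False
        then have "sum_list (F j) = 0" using F ez by (auto simp: assoc_iff)
        then have "\<forall>y\<in>set (F j). y = 0" by simp
        then have "replicate (length (F j)) 0 = F j" by (rule replicate_length_same)
        then show ?thesis using False F by (auto simp: F0_def assoc_iff l_def)
      qed
    qed
    show ?thesis
    proof (cases "sum_list lam = e 0")
      case True
      have "F0 \<in> assoc_families lam e"
        unfolding assoc_iff using True ez by (auto simp: F0_def S0 l_def)
      then have A: "assoc_families lam e = {F0}" using uniq by blast
      have "TT G lam e F0 = G lam"
        using vec_fact_pos[of lam] sort_part_partition[OF lp] by (simp add: TT_def S0 F0_def)
      then show ?thesis using True me by (simp add: Phi_def A)
    next
      case False
      have "assoc_families lam e = {}"
      proof -
        { fix F assume "F \<in> assoc_families lam e"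
          then have "F = F0" "F \<in> assoc_families lam e" using uniq by auto
          then have "sum_list lam = e 0" by (auto simp: assoc_iff F0_def dest: spec[of _ 0]) }
        then show ?thesis using False by blast
      qed
      then show ?thesis using False by (simp add: Phi_def)
    qed
  qed
qed

definition msr :: "monom \<Rightarrow> nat" where "msr e = (\<Sum>k\<in>SS e. k + 1)"

lemma merge_split: "merge_monom (\<lambda>j. e (2*j)) (\<lambda>j. e (2*j+1)) = e"
proof
  fix k show "merge_monom (\<lambda>j. e (2*j)) (\<lambda>j. e (2*j+1)) k = e k"
    by (cases "even k") (simp_all add: merge_monom_def odd_two_times_div_two_succ)
qed

lemma msr_less:
  assumes me: "is_monom e" and ns: "\<not> SS e \<subseteq> {0}"
  shows "msr (\<lambda>j. e (2*j)) < msr e" "msr (\<lambda>j. e (2*j+1)) < msr e"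
proof -
  define a where "a = (\<lambda>j. e (2*j))"
  define b where "b = (\<lambda>j. e (2*j+1))"
  have eab: "merge_monom a b = e" unfolding a_def b_def by (rule merge_split)
  have ma: "is_monom a" and mb: "is_monom b" using me eab is_monom_merge by metis+
  have fa: "finite (SS a)" and fb: "finite (SS b)" using ma mb by (auto simp: is_monom_SS)
  have me_eq: "msr e = (\<Sum>j\<in>SS a. 2*j + 1) + (\<Sum>j\<in>SS b. 2*j + 1 + 1)"
    unfolding msr_def using sum_merge[OF ma mb, of "\<lambda>k. k + 1"] eab by simp
  have ale: "(\<Sum>j\<in>SS a. j + 1) \<le> (\<Sum>j\<in>SS a. 2*j + 1)" by (rule sum_mono) simp
  show "msr a < msr e" unfolding a_def[symmetric]
  proof (cases "SS b = {}")
    case False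
    then obtain j where "j \<in> SS b" by blast
    then have "0 < (\<Sum>j\<in>SS b. 2*j + 1 + 1)" using fb by (simp add: sum_pos2[where i=j])
    then show "msr a < msr e" using ale me_eq by (simp add: msr_def)
  next
    case True
    obtain k where k: "k \<in> SS e" "k \<noteq> 0" using ns by blast
    have "k \<in> (\<lambda>j. 2*j) ` SS a" using k True SS_merge[of a b] eab by auto
    then obtain j where j: "j \<in> SS a" "0 < j" using k by auto
    have "(\<Sum>j\<in>SS a. j + 1) < (\<Sum>j\<in>SS a. 2*j + 1)"
      by (rule sum_strict_mono_ex1) (use fa j in auto)
    then show "msr a < msr e" using me_eq True by (simp add: msr_def)
  qed
  show "msr b < msr e" unfolding b_def[symmetric]
  proof (cases "SS b = {}")
    case False
    have "(\<Sum>j\<in>SS b. j + 1) < (\<Sum>j\<in>SS b. 2*j + 1 + 1)"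
      by (rule sum_strict_mono) (use fb False in auto)
    then show "msr b < msr e" using me_eq by (simp add: msr_def)
  next
    case True
    obtain k where k: "k \<in> SS e" using ns by blast
    have "k + 1 \<le> msr e" unfolding msr_def
      by (rule member_le_sum) (use k me in \<open>auto simp: is_monom_SS\<close>)
    then show "msr b < msr e" using True by (simp add: msr_def)
  qed
qed

theorem mainTheorem14:
  fixes p :: "nat list \<Rightarrow> sfun"
  assumes "full_sequence p"
  shows "binomial_type p \<longleftrightarrow> (\<exists>G. quasi_genus G \<and> associated p G)"
proof
  assume "\<exists>G. quasi_genus G \<and> associated p G"
  then obtain G where "associated p G" by blast
  then have pp: "\<And>lam e. is_partition lam \<Longrightarrow> p lam e = Phi G lam e" by (simp add: associated_Phi)
  show "binomial_type p"
    unfolding binomial_type_def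
  proof (intro allI impI)
    fix lam a b assume lp: "is_partition lam"
    have "p lam (merge_monom a b) = Phi G lam (merge_monom a b)" using pp[OF lp] .
    also have "\<dots> = (\<Sum>\<alpha>\<in>{\<alpha>. vec_le \<alpha> lam}. of_nat (vec_binom lam \<alpha>) * Phi G \<alpha> a * Phi G (vec_minus lam \<alpha>) b)"
      by (rule Phi_merge)
    also have "\<dots> = (\<Sum>\<alpha>\<in>{\<alpha>. vec_le \<alpha> lam}.
             of_nat (vec_binom lam \<alpha>) * p (sort_part \<alpha>) a * p (sort_part (vec_minus lam \<alpha>)) b)"
      by (simp add: pp partition_sort_part Phi_sort_part)
    finally show "p lam (merge_monom a b) = (\<Sum>\<alpha>\<in>{\<alpha>. vec_le \<alpha> lam}.
             of_nat (vec_binom lam \<alpha>) * p (sort_part \<alpha>) a * p (sort_part (vec_minus lam \<alpha>)) b)" .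
  qed
next
  assume bt: "binomial_type p"
  have hom: "\<And>lam. is_partition lam \<Longrightarrow> homog_sym (sum_list lam) (p lam)"
    and ed: "\<And>lam. is_partition lam \<Longrightarrow> exact_degree (p lam) lam"
    using assms by (auto simp: full_sequence_def)
  have zero: "p lam e = 0" if "is_partition lam" "\<not> (is_monom e \<and> monom_deg e = sum_list lam)" for lam e
    using hom[OF that(1)] that(2) by (auto simp: homog_sym_def)
  have pnil: "is_partition []" by (simp add: is_partition_def)
  define c where "c = p [] (\<lambda>_. 0)"
  have cnz: "c \<noteq> 0" using ed[OF pnil]
    by (simp add: exact_degree_def mcoeff_def monom_of_def c_def part_get_def[abs_def])
  have "c = c * c"
  proof -
    have mz: "merge_monom (\<lambda>_. 0) (\<lambda>_. 0) = (\<lambda>_. 0)" by (auto simp: merge_monom_def)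
    have V: "{\<alpha>. vec_le \<alpha> []} = {[]}" by (auto simp: vec_le_def)
    have h: "p [] (merge_monom (\<lambda>_. 0) (\<lambda>_. 0)) = (\<Sum>\<alpha>\<in>{\<alpha>. vec_le \<alpha> []}.
       of_nat (vec_binom [] \<alpha>) * p (sort_part \<alpha>) (\<lambda>_. 0) * p (sort_part (vec_minus [] \<alpha>)) (\<lambda>_. 0))"
      using bt pnil unfolding binomial_type_def by blast
    then show ?thesis by (simp add: mz V vec_binom_def vec_minus_def sort_part_def c_def)
  qed
  then have c1: "c = 1" using cnz by simp
  define G where "G = (\<lambda>mu. p mu (\<lambda>k. if k = 0 then sum_list mu else 0))"
  have "(\<lambda>k::nat. if k = 0 then sum_list ([]::nat list) else 0) = (\<lambda>_. 0)" by auto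
  then have G0: "G [] = 1" using c1 by (simp add: G_def c_def)
  have main: "\<forall>lam. is_partition lam \<longrightarrow> p lam e = Phi G lam e" if "is_monom e" for e
    using that
  proof (induction "msr e" arbitrary: e rule: less_induct)
    case less
    show ?case
    proof (intro allI impI)
      fix lam assume lp: "is_partition lam"
      show "p lam e = Phi G lam e"
      proof (cases "SS e \<subseteq> {0}")
        case True
        have ez: "\<And>j. j \<noteq> 0 \<Longrightarrow> e j = 0" using True by (auto simp: SS_def)
        have e_eq: "e = (\<lambda>k. if k = 0 then e 0 else 0)" using ez by auto
        have deg: "monom_deg e = e 0"
        proof (cases "e 0 = 0")
          case True
          then have "SS e = {}" using \<open>SS e \<subseteq> {0}\<close> by (auto simp: SS_def)
          then show ?thesis using True by (simp add: monom_deg_def SS_def)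
        next
          case False
          then have "SS e = {0}" using \<open>SS e \<subseteq> {0}\<close> by (auto simp: SS_def)
          then show ?thesis by (simp add: monom_deg_def SS_def)
        qed
        show ?thesis
        proof (cases "sum_list lam = e 0")
          case True
          have "p lam e = G lam" unfolding G_def using True e_eq by metis
          then show ?thesis using Phi_base[of lam e G, OF lp \<open>SS e \<subseteq> {0}\<close> G0] True by simp
        next
          case False
          then have "p lam e = 0" using zero[OF lp] deg by simp
          then show ?thesis using Phi_base[of lam e G, OF lp \<open>SS e \<subseteq> {0}\<close> G0] False by simp
        qed
      next
        case False
        define a where "a = (\<lambda>j. e (2*j))"
        define b where "b = (\<lambda>j. e (2*j+1))"
        have eab: "merge_monom a b = e" unfolding a_def b_def by (rule merge_split)
        have ma: "is_monom a" and mb: "is_monom b" using less.prems eab is_monom_merge by metis+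
        have la: "msr a < msr e" and lb: "msr b < msr e"
          using msr_less[OF less.prems False] by (simp_all add: a_def b_def)
        have IHa: "\<And>mu. is_partition mu \<Longrightarrow> p mu a = Phi G mu a" using less.hyps[OF la ma] by blast
        have IHb: "\<And>mu. is_partition mu \<Longrightarrow> p mu b = Phi G mu b" using less.hyps[OF lb mb] by blast
        have "p lam e = p lam (merge_monom a b)" by (simp add: eab)
        also have "\<dots> = (\<Sum>\<alpha>\<in>{\<alpha>. vec_le \<alpha> lam}.
             of_nat (vec_binom lam \<alpha>) * p (sort_part \<alpha>) a * p (sort_part (vec_minus lam \<alpha>)) b)"
          using bt lp by (simp add: binomial_type_def)
        also have "\<dots> = (\<Sum>\<alpha>\<in>{\<alpha>. vec_le \<alpha> lam}. of_nat (vec_binom lam \<alpha>) * Phi G \<alpha> a * Phi G (vec_minus lam \<alpha>) b)"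
          by (simp add: IHa IHb partition_sort_part Phi_sort_part)
        also have "\<dots> = Phi G lam (merge_monom a b)" by (rule Phi_merge[symmetric])
        finally show ?thesis by (simp add: eab)
      qed
    qed
  qed
  have "associated p G"
    unfolding associated_Phi
  proof (intro allI impI)
    fix lam e assume lp: "is_partition lam"
    show "p lam e = Phi G lam e"
    proof (cases "is_monom e")
      case True then show ?thesis using main lp by blast
    next
      case False then show ?thesis using zero[OF lp] by (simp add: Phi_def)
    qed
  qed
  then show "\<exists>G. quasi_genus G \<and> associated p G" using G0 by (auto simp: quasi_genus_def)
qed

end
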